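(* Every graph $G$ with circular chromatic number $\chi_c(G)\le 5/2$ belongs to CBU.
   Context: Let $e_1,\ldots,e_d$ be the standard basis of $\mathbb{R}^d$. For $d\ge 1$, a graph belongs to $d$-CBU if one can assign to each vertex an axis-parallel box (product of $d$ closed intervals of positive length) in $\mathbb{R}^d$ such that the boxes have pairwise disjoint interiors, two distinct vertices are adjacent iff their boxes intersect, and any two intersecting boxes intersect in a $(d-1)$-dimensional box orthogonal to $e_1$. CBU is the union of $d$-CBU over all $d\ge 1$. *)

theory Defs
  imports Complex_Main
begin

definition is_graph :: "'a set \<Rightarrow> ('a \<Rightarrow> 'a \<Rightarrow> bool) \<Rightarrow> bool" where
  "is_graph V E \<longleftrightarrow> (\<forall>u v. E u v \<longrightarrow> u \<in> V \<and> v \<in> V) \<and> (\<forall>u v. E u v \<longrightarrow> E v u) \<and> (\<forall>v. \<not> E v v)"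

definition circ_coloring :: "'a set \<Rightarrow> ('a \<Rightarrow> 'a \<Rightarrow> bool) \<Rightarrow> nat \<Rightarrow> nat \<Rightarrow> ('a \<Rightarrow> nat) \<Rightarrow> bool" where
  "circ_coloring V E k d c \<longleftrightarrow> (\<forall>v\<in>V. c v < k) \<and>
     (\<forall>u\<in>V. \<forall>v\<in>V. E u v \<longrightarrow>
        int d \<le> \<bar>int (c u) - int (c v)\<bar> \<and> \<bar>int (c u) - int (c v)\<bar> \<le> int k - int d)"

definition circular_chromatic_number :: "'a set \<Rightarrow> ('a \<Rightarrow> 'a \<Rightarrow> bool) \<Rightarrow> real" where
  "circular_chromatic_number V E =
     Inf {real k / real d | k d. 1 \<le> d \<and> d \<le> k \<and> (\<exists>c. circ_coloring V E k d c)}"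

text \<open>Points of R^d are represented as functions nat \<Rightarrow> real vanishing at coordinates \<ge> d
  (coordinate i corresponds to e_(i+1); coordinate 0 is the e_1 direction).\<close>
definition cbox_d :: "nat \<Rightarrow> (nat \<Rightarrow> real) \<Rightarrow> (nat \<Rightarrow> real) \<Rightarrow> (nat \<Rightarrow> real) set" where
  "cbox_d d a b = {x. (\<forall>i<d. a i \<le> x i \<and> x i \<le> b i) \<and> (\<forall>i\<ge>d. x i = 0)}"

definition obox_d :: "nat \<Rightarrow> (nat \<Rightarrow> real) \<Rightarrow> (nat \<Rightarrow> real) \<Rightarrow> (nat \<Rightarrow> real) set" where
  "obox_d d a b = {x. (\<forall>i<d. a i < x i \<and> x i < b i) \<and> (\<forall>i\<ge>d. x i = 0)}"

definition d_CBU :: "nat \<Rightarrow> 'a set \<Rightarrow> ('a \<Rightarrow> 'a \<Rightarrow> bool) \<Rightarrow> bool" where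
  "d_CBU d V E \<longleftrightarrow> (\<exists>A B :: 'a \<Rightarrow> nat \<Rightarrow> real.
     (\<forall>v\<in>V. \<forall>i<d. A v i < B v i) \<and>
     (\<forall>u\<in>V. \<forall>v\<in>V. u \<noteq> v \<longrightarrow> obox_d d (A u) (B u) \<inter> obox_d d (A v) (B v) = {}) \<and>
     (\<forall>u\<in>V. \<forall>v\<in>V. u \<noteq> v \<longrightarrow>
        (E u v \<longleftrightarrow> cbox_d d (A u) (B u) \<inter> cbox_d d (A v) (B v) \<noteq> {})) \<and>
     (\<forall>u\<in>V. \<forall>v\<in>V. u \<noteq> v \<longrightarrow> cbox_d d (A u) (B u) \<inter> cbox_d d (A v) (B v) \<noteq> {} \<longrightarrow>
        (\<exists>a b. a 0 = b 0 \<and> (\<forall>i. 1 \<le> i \<and> i < d \<longrightarrow> a i < b i) \<and>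
               cbox_d d (A u) (B u) \<inter> cbox_d d (A v) (B v) = cbox_d d a b)))"

definition CBU :: "'a set \<Rightarrow> ('a \<Rightarrow> 'a \<Rightarrow> bool) \<Rightarrow> bool" where
  "CBU V E \<longleftrightarrow> (\<exists>d\<ge>1. d_CBU d V E)"

end

theory Submission
  imports Defs "HOL-Analysis.Analysis"
begin


lemma finite_subseq:
  fixes F :: "nat \<Rightarrow> 'a \<Rightarrow> real"
  assumes "finite V" "\<And>j v. v \<in> V \<Longrightarrow> \<bar>F j v\<bar> \<le> M"
  shows "\<exists>s l. strict_mono s \<and> (\<forall>v\<in>V. (\<lambda>j. F (s j) v) \<longlonglongrightarrow> l v)"
  using assms
proof (induction V rule: finite_induct)
  case empty
  show ?case by (rule exI[of _ id]) (auto simp: strict_mono_def)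
next
  case (insert x V)
  then obtain s l where s: "strict_mono s" and l: "\<forall>v\<in>V. (\<lambda>j. F (s j) v) \<longlonglongrightarrow> l v" by blast
  have "bounded (range (\<lambda>j. F (s j) x))"
    unfolding bounded_real using insert.prems by blast
  then obtain lx t where t: "strict_mono t" and lx: "((\<lambda>j. F (s j) x) \<circ> t) \<longlonglongrightarrow> lx"
    using bounded_imp_convergent_subsequence by blast
  show ?case
  proof (intro exI conjI)
    show "strict_mono (s \<circ> t)" using s t by (rule strict_mono_o)
    show "\<forall>v\<in>insert x V. (\<lambda>j. F ((s \<circ> t) j) v) \<longlonglongrightarrow> (l(x := lx)) v"
    proof
      fix v assume "v \<in> insert x V"
      show "(\<lambda>j. F ((s \<circ> t) j) v) \<longlonglongrightarrow> (l(x := lx)) v"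
      proof (cases "v = x")
        case True then show ?thesis using lx by (simp add: o_def)
      next
        case False
        then have "v \<in> V" using \<open>v \<in> insert x V\<close> by blast
        then have "((\<lambda>j. F (s j) v) \<circ> t) \<longlonglongrightarrow> l v" using l t LIMSEQ_subseq_LIMSEQ by blast
        then show ?thesis using False by (simp add: o_def)
      qed
    qed
  qed
qed

lemma real_col:
  fixes V :: "'a set" and E :: "'a \<Rightarrow> 'a \<Rightarrow> bool"
  assumes fin: "finite V" and g: "is_graph V E"
    and cc: "circular_chromatic_number V E \<le> 5 / 2"
  shows "\<exists>f :: 'a \<Rightarrow> real. (\<forall>v\<in>V. 0 \<le> f v \<and> f v \<le> 5/2) \<and>
      (\<forall>u\<in>V. \<forall>v\<in>V. E u v \<longrightarrow> 1 \<le> \<bar>f u - f v\<bar> \<and> \<bar>f u - f v\<bar> \<le> 3/2)"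
proof -
  define S where "S = {real k / real d | k d. 1 \<le> d \<and> d \<le> k \<and> (\<exists>c. circ_coloring V E k d c)}"
  obtain h where h: "bij_betw h V {0..<card V}" using ex_bij_betw_finite_nat[OF fin] by blast
  have "circ_coloring V E (Suc (card V)) 1 h"
    unfolding circ_coloring_def
  proof (intro conjI ballI impI)
    fix v assume "v \<in> V" then have "h v \<in> {0..<card V}" by (rule bij_betw_apply[OF h])
    then show "h v < Suc (card V)" by simp
  next
    fix u v assume uv: "u \<in> V" "v \<in> V" "E u v"
    then have "u \<noteq> v" using g by (auto simp: is_graph_def)
    then have "h u \<noteq> h v" using h uv by (auto simp: bij_betw_def inj_on_def)
    then show "int 1 \<le> \<bar>int (h u) - int (h v)\<bar>" by simp
    have "h u < card V" "h v < card V" using h uv by (auto simp: bij_betw_def)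
    then show "\<bar>int (h u) - int (h v)\<bar> \<le> int (Suc (card V)) - int 1" by simp
  qed
  then have Sne: "S \<noteq> {}" unfolding S_def by fastforce
  define P where "P j k d c \<longleftrightarrow> 1 \<le> d \<and> d \<le> k \<and> circ_coloring V E k d c \<and>
        real k / real d < 5/2 + 1 / (real j + 1)" for j k d c
  have ex: "\<forall>j::nat. \<exists>k d c. P j k d c"
  proof
    fix j :: nat
    have "Inf S \<le> 5/2" using cc unfolding circular_chromatic_number_def S_def .
    moreover have "0 < 1 / (real j + 1)" by simp
    ultimately have "Inf S < 5/2 + 1 / (real j + 1)" by linarith
    then obtain x where "x \<in> S" "x < 5/2 + 1 / (real j + 1)" using cInf_lessD[OF Sne] by blast
    then show "\<exists>k d c. P j k d c" unfolding S_def P_def by blast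
  qed
  have "\<exists>K. \<forall>j. \<exists>d c. P j (K j) d c" using ex by (rule choice)
  then obtain K where K: "\<forall>j. \<exists>d c. P j (K j) d c" ..
  have "\<exists>D. \<forall>j. \<exists>c. P j (K j) (D j) c" using K by (rule choice)
  then obtain D where D: "\<forall>j. \<exists>c. P j (K j) (D j) c" ..
  have "\<exists>C. \<forall>j. P j (K j) (D j) (C j)" using D by (rule choice)
  then obtain C where C: "\<forall>j. P j (K j) (D j) (C j)" ..
  have KDC: "1 \<le> D j \<and> D j \<le> K j \<and> circ_coloring V E (K j) (D j) (C j) \<and>
        real (K j) / real (D j) < 5/2 + 1 / (real j + 1)" for j
    using C unfolding P_def by blast
  define F where "F j v = real (C j v) / real (D j)" for j v
  have Fb: "0 \<le> F j v \<and> F j v < 5/2 + 1 / (real j + 1)" if "v \<in> V" for j v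
  proof -
    have "C j v < K j" using KDC[of j] that by (auto simp: circ_coloring_def)
    then have "real (C j v) / real (D j) \<le> real (K j) / real (D j)"
      by (simp add: divide_right_mono)
    then show ?thesis using KDC[of j] by (simp add: F_def)
  qed
  have Fe: "1 \<le> \<bar>F j u - F j v\<bar> \<and> \<bar>F j u - F j v\<bar> \<le> 3/2 + 1 / (real j + 1)"
    if "u \<in> V" "v \<in> V" "E u v" for j u v
  proof -
    have dpos: "real (D j) > 0" using KDC[of j] by simp
    have c: "int (D j) \<le> \<bar>int (C j u) - int (C j v)\<bar>" "\<bar>int (C j u) - int (C j v)\<bar> \<le> int (K j) - int (D j)"
      using KDC[of j] that unfolding circ_coloring_def by blast+
    have c1: "real (D j) \<le> \<bar>real (C j u) - real (C j v)\<bar>" using c(1) by linarith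
    have c2: "\<bar>real (C j u) - real (C j v)\<bar> \<le> real (K j) - real (D j)" using c(2) by linarith
    have eq: "\<bar>F j u - F j v\<bar> = \<bar>real (C j u) - real (C j v)\<bar> / real (D j)"
      using dpos by (simp add: F_def diff_divide_distrib[symmetric])
    have "1 \<le> \<bar>F j u - F j v\<bar>" using eq c1 dpos by simp
    moreover have "\<bar>F j u - F j v\<bar> \<le> (real (K j) - real (D j)) / real (D j)"
      using eq c2 dpos by (simp add: divide_right_mono)
    moreover have "(real (K j) - real (D j)) / real (D j) = real (K j) / real (D j) - 1"
      using dpos by (simp add: field_simps)
    ultimately show ?thesis using KDC[of j] by linarith
  qed
  have "\<And>j v. v \<in> V \<Longrightarrow> \<bar>F j v\<bar> \<le> 4"
  proof -
    fix j v assume "v \<in> V"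
    have "1 / (real j + 1) \<le> 1" by simp
    then show "\<bar>F j v\<bar> \<le> 4" using Fb[OF \<open>v \<in> V\<close>, of j] by linarith
  qed
  then obtain s l where s: "strict_mono s" and l: "\<forall>v\<in>V. (\<lambda>j. F (s j) v) \<longlonglongrightarrow> l v"
    using finite_subseq[OF fin] by blast
  have eps: "(\<lambda>j. 1 / (real (s j) + 1)) \<longlonglongrightarrow> 0"
  proof -
    have "(\<lambda>j. 1 / (real j + 1)) \<longlonglongrightarrow> (0::real)"
      using LIMSEQ_inverse_real_of_nat by (simp add: inverse_eq_divide add.commute)
    then have "((\<lambda>j. 1 / (real j + 1)) \<circ> s) \<longlonglongrightarrow> (0::real)" using s LIMSEQ_subseq_LIMSEQ by blast
    then show ?thesis by (simp add: o_def)
  qed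
  have "(\<forall>v\<in>V. 0 \<le> l v \<and> l v \<le> 5/2)"
  proof
    fix v assume v: "v \<in> V"
    have lv: "(\<lambda>j. F (s j) v) \<longlonglongrightarrow> l v" using l v by blast
    have b1: "\<forall>n. 0 \<le> F (s n) v" using Fb[OF v] by blast
    have b2: "\<forall>n. F (s n) v \<le> 5/2 + 1 / (real (s n) + 1)"
    proof
      fix n show "F (s n) v \<le> 5/2 + 1 / (real (s n) + 1)" using Fb[OF v, of "s n"] by linarith
    qed
    have "0 \<le> l v" using LIMSEQ_le_const[OF lv, of 0] b1 by blast
    moreover have t: "(\<lambda>j. 5/2 + 1 / (real (s j) + 1)) \<longlonglongrightarrow> 5/2 + 0"
      by (rule tendsto_add[OF tendsto_const eps])
    have "l v \<le> 5/2 + 0" using LIMSEQ_le[OF lv t] b2 by blast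
    ultimately show "0 \<le> l v \<and> l v \<le> 5/2" by simp
  qed
  moreover have "\<forall>u\<in>V. \<forall>v\<in>V. E u v \<longrightarrow> 1 \<le> \<bar>l u - l v\<bar> \<and> \<bar>l u - l v\<bar> \<le> 3/2"
  proof (intro ballI impI)
    fix u v assume uv: "u \<in> V" "v \<in> V" "E u v"
    have lu: "(\<lambda>j. F (s j) u) \<longlonglongrightarrow> l u" using l uv by blast
    have lv: "(\<lambda>j. F (s j) v) \<longlonglongrightarrow> l v" using l uv by blast
    have lim: "(\<lambda>j. \<bar>F (s j) u - F (s j) v\<bar>) \<longlonglongrightarrow> \<bar>l u - l v\<bar>"
      by (rule tendsto_rabs[OF tendsto_diff[OF lu lv]])
    have b1: "\<forall>n. 1 \<le> \<bar>F (s n) u - F (s n) v\<bar>" using Fe[OF uv] by blast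
    have b2: "\<forall>n. \<bar>F (s n) u - F (s n) v\<bar> \<le> 3/2 + 1 / (real (s n) + 1)" using Fe[OF uv] by blast
    have "1 \<le> \<bar>l u - l v\<bar>" using LIMSEQ_le_const[OF lim, of 1] b1 by blast
    moreover have t: "(\<lambda>j. 3/2 + 1 / (real (s j) + 1)) \<longlonglongrightarrow> 3/2 + 0"
      by (rule tendsto_add[OF tendsto_const eps])
    have "\<bar>l u - l v\<bar> \<le> 3/2 + 0" using LIMSEQ_le[OF lim t] b2 by blast
    ultimately show "1 \<le> \<bar>l u - l v\<bar> \<and> \<bar>l u - l v\<bar> \<le> 3/2" by simp
  qed
  ultimately show ?thesis by blast
qed

lemma mod5:
  fixes X Y :: int
  assumes "0 \<le> X" "X \<le> 5" "0 \<le> Y" "Y \<le> 5" "2 \<le> \<bar>X - Y\<bar>" "\<bar>X - Y\<bar> \<le> 3"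
  shows "2 \<le> \<bar>int (nat X mod 5) - int (nat Y mod 5)\<bar> \<and> \<bar>int (nat X mod 5) - int (nat Y mod 5)\<bar> \<le> 3"
proof -
  have "X \<in> {0,1,2,3,4,5}" "Y \<in> {0,1,2,3,4,5}" using assms by auto
  then show ?thesis using assms by (elim insertE; simp)+
qed

lemma disc_col:
  fixes f :: "'a \<Rightarrow> real"
  assumes "\<forall>v\<in>V. 0 \<le> f v \<and> f v \<le> 5/2"
    "\<forall>u\<in>V. \<forall>v\<in>V. E u v \<longrightarrow> 1 \<le> \<bar>f u - f v\<bar> \<and> \<bar>f u - f v\<bar> \<le> 3/2"
  shows "\<exists>col. (\<forall>v\<in>V. col v < (5::nat)) \<and> (\<forall>u\<in>V. \<forall>v\<in>V. E u v \<longrightarrow>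
      2 \<le> \<bar>int (col u) - int (col v)\<bar> \<and> \<bar>int (col u) - int (col v)\<bar> \<le> 3)"
proof (intro exI conjI ballI impI)
  define g where "g v = nat \<lfloor>2 * f v\<rfloor> mod 5" for v
  fix v assume "v \<in> V" show "g v < 5" by (simp add: g_def)
next
  fix u v assume uv: "u \<in> V" "v \<in> V" "E u v"
  define x where "x = 2 * f u"
  define y where "y = 2 * f v"
  have e: "1 \<le> \<bar>f u - f v\<bar> \<and> \<bar>f u - f v\<bar> \<le> 3/2" using assms(2) uv by blast
  have r: "0 \<le> f u \<and> f u \<le> 5/2" "0 \<le> f v \<and> f v \<le> 5/2" using assms(1) uv by auto
  have "x - y = 2 * (f u - f v)" by (simp add: x_def y_def algebra_simps)
  then have ab: "\<bar>x - y\<bar> = 2 * \<bar>f u - f v\<bar>" by (simp only: abs_mult)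
  have b: "0 \<le> x" "x \<le> 5" "0 \<le> y" "y \<le> 5" "2 \<le> \<bar>x - y\<bar>" "\<bar>x - y\<bar> \<le> 3"
    using e r ab unfolding x_def y_def by linarith+
  have fl: "0 \<le> \<lfloor>x\<rfloor>" "\<lfloor>x\<rfloor> \<le> 5" "0 \<le> \<lfloor>y\<rfloor>" "\<lfloor>y\<rfloor> \<le> 5" "2 \<le> \<bar>\<lfloor>x\<rfloor> - \<lfloor>y\<rfloor>\<bar>" "\<bar>\<lfloor>x\<rfloor> - \<lfloor>y\<rfloor>\<bar> \<le> 3"
    using b by linarith+
  then have "2 \<le> \<bar>int (nat \<lfloor>x\<rfloor> mod 5) - int (nat \<lfloor>y\<rfloor> mod 5)\<bar> \<and> \<bar>int (nat \<lfloor>x\<rfloor> mod 5) - int (nat \<lfloor>y\<rfloor> mod 5)\<bar> \<le> 3"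
    by (rule mod5)
  then show "2 \<le> \<bar>int (nat \<lfloor>2 * f u\<rfloor> mod 5) - int (nat \<lfloor>2 * f v\<rfloor> mod 5)\<bar>"
    "\<bar>int (nat \<lfloor>2 * f u\<rfloor> mod 5) - int (nat \<lfloor>2 * f v\<rfloor> mod 5)\<bar> \<le> 3"
    unfolding x_def y_def by auto
qed



definition a0 :: "nat \<Rightarrow> real" where
  "a0 c = (if c = 0 then 1 else if c = 1 then 1 else if c = 2 then 2 else if c = 3 then 0 else 3)"
definition b0 :: "nat \<Rightarrow> real" where
  "b0 c = (if c = 0 then 2 else if c = 1 then 3 else if c = 2 then 3 else if c = 3 then 1 else 4)"

lemma ab0: "a0 c < b0 c" by (simp add: a0_def b0_def)

lemma touch:
  assumes "c1 < 5" "c2 < 5" "2 \<le> \<bar>int c1 - int c2\<bar>" "\<bar>int c1 - int c2\<bar> \<le> 3"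
  shows "b0 c1 = a0 c2 \<or> b0 c2 = a0 c1"
proof -
  have "c1 \<in> {0,1,2,3,4}" "c2 \<in> {0,1,2,3,4}" using assms by auto
  then show ?thesis using assms by (auto simp: a0_def b0_def)
qed

lemma cbox_inter:
  "cbox_d d a b \<inter> cbox_d d a' b' = cbox_d d (\<lambda>i. max (a i) (a' i)) (\<lambda>i. min (b i) (b' i))"
  by (auto simp: cbox_d_def)

lemma cbox_ne: "cbox_d d a b \<noteq> {} \<longleftrightarrow> (\<forall>i<d. a i \<le> b i)"
proof
  assume "cbox_d d a b \<noteq> {}" then show "\<forall>i<d. a i \<le> b i" by (force simp: cbox_d_def)
next
  assume h: "\<forall>i<d. a i \<le> b i"
  have "(\<lambda>i. if i < d then a i else 0) \<in> cbox_d d a b" using h by (simp add: cbox_d_def)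
  then show "cbox_d d a b \<noteq> {}" by blast
qed

lemma obox_disj:
  assumes "i < d" "b i \<le> a' i \<or> b' i \<le> a i"
  shows "obox_d d a b \<inter> obox_d d a' b' = {}"
  using assms by (force simp: obox_d_def)

lemma boxes:
  fixes V :: "'a set" and E :: "'a \<Rightarrow> 'a \<Rightarrow> bool"
  assumes fin: "finite V" and g: "is_graph V E"
    and col: "\<forall>v\<in>V. col v < 5"
    and cole: "\<forall>u\<in>V. \<forall>v\<in>V. E u v \<longrightarrow> 2 \<le> \<bar>int (col u) - int (col v)\<bar> \<and> \<bar>int (col u) - int (col v)\<bar> \<le> 3"
  shows "CBU V E"
proof -
  obtain h where h: "bij_betw h V {0..<card V}" using ex_bij_betw_finite_nat[OF fin] by blast
  have hinj: "\<And>u v. u \<in> V \<Longrightarrow> v \<in> V \<Longrightarrow> h u = h v \<Longrightarrow> u = v"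
    using h by (auto simp: bij_betw_def inj_on_def)
  have hlt: "\<And>v. v \<in> V \<Longrightarrow> h v < card V" using h by (auto simp: bij_betw_def)
  have sym: "\<And>u v. E u v \<Longrightarrow> E v u" using g by (auto simp: is_graph_def)
  define d where "d = Suc (card V)"
  define A :: "'a \<Rightarrow> nat \<Rightarrow> real" where "A v i = (if i = 0 then a0 (col v)
      else if h v + 1 = i then 0 else if (\<exists>w\<in>V. h w + 1 = i \<and> E v w) then 1/2 else 2)" for v i
  define B :: "'a \<Rightarrow> nat \<Rightarrow> real" where "B v i = (if i = 0 then b0 (col v)
      else if h v + 1 = i then 1 else 3)" for v i
  have AB: "\<forall>v\<in>V. \<forall>i<d. A v i < B v i" by (auto simp: A_def B_def ab0)
  have adj: "B u 0 = A v 0 \<or> B v 0 = A u 0" if "u \<in> V" "v \<in> V" "E u v" for u v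
    using touch[of "col u" "col v"] col cole that by (simp add: A_def B_def)
  have pos: "max (A u i) (A v i) < min (B u i) (B v i)"
    if "u \<in> V" "v \<in> V" "E u v" "u \<noteq> v" "i \<ge> 1" for u v i
  proof -
    have "h u \<noteq> h v" using hinj that by blast
    moreover have "h u + 1 = i \<Longrightarrow> \<exists>w\<in>V. h w + 1 = i \<and> E v w" using that sym by blast
    moreover have "h v + 1 = i \<Longrightarrow> \<exists>w\<in>V. h w + 1 = i \<and> E u w" using that by blast
    ultimately show ?thesis using that by (auto simp: A_def B_def)
  qed
  have sep: "B u (h u + 1) < A v (h u + 1)"
    if "u \<in> V" "v \<in> V" "\<not> E u v" "u \<noteq> v" for u v
  proof -
    have "h v \<noteq> h u" using hinj that by blast
    moreover have "\<not> (\<exists>w\<in>V. h w + 1 = h u + 1 \<and> E v w)"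
      using hinj that sym by auto
    ultimately show ?thesis by (simp add: A_def B_def)
  qed
  have hd: "\<And>u. u \<in> V \<Longrightarrow> h u + 1 < d" using hlt by (simp add: d_def)
  have P1: "obox_d d (A u) (B u) \<inter> obox_d d (A v) (B v) = {}"
    if uv: "u \<in> V" "v \<in> V" "u \<noteq> v" for u v
  proof (cases "E u v")
    case True
    then show ?thesis using adj[OF uv(1,2) True] by (intro obox_disj[of 0]) (auto simp: d_def)
  next
    case False
    then show ?thesis using sep[OF uv(1,2) False uv(3)] hd[OF uv(1)]
      by (intro obox_disj[of "h u + 1"]) auto
  qed
  have P0: "E u v" if uv: "u \<in> V" "v \<in> V" "u \<noteq> v"
      and ne: "cbox_d d (A u) (B u) \<inter> cbox_d d (A v) (B v) \<noteq> {}" for u v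
  proof (rule ccontr)
    assume "\<not> E u v"
    then have "B u (h u + 1) < A v (h u + 1)" using sep uv by blast
    moreover have "h u + 1 < d" using hd uv by blast
    ultimately show False using ne unfolding cbox_inter cbox_ne by force
  qed
  have P2: "cbox_d d (A u) (B u) \<inter> cbox_d d (A v) (B v) \<noteq> {}"
    if uv: "u \<in> V" "v \<in> V" "u \<noteq> v" and e: "E u v" for u v
  proof -
    have "\<forall>i<d. max (A u i) (A v i) \<le> min (B u i) (B v i)"
    proof (intro allI impI)
      fix i assume "i < d"
      show "max (A u i) (A v i) \<le> min (B u i) (B v i)"
      proof (cases "i = 0")
        case True
        then show ?thesis using adj[OF uv(1,2) e] AB uv \<open>i < d\<close> by fastforce
      next
        case False
        then show ?thesis using pos[OF uv(1,2) e uv(3), of i] by simp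
      qed
    qed
    then show ?thesis unfolding cbox_inter cbox_ne by simp
  qed
  have P3: "\<exists>a b. a 0 = b 0 \<and> (\<forall>i. 1 \<le> i \<and> i < d \<longrightarrow> a i < b i) \<and>
               cbox_d d (A u) (B u) \<inter> cbox_d d (A v) (B v) = cbox_d d a b"
    if uv: "u \<in> V" "v \<in> V" "u \<noteq> v"
      and ne: "cbox_d d (A u) (B u) \<inter> cbox_d d (A v) (B v) \<noteq> {}" for u v
  proof -
    have e: "E u v" using P0 uv ne by blast
    have "0 < d" by (simp add: d_def)
    have eq0: "max (A u 0) (A v 0) = min (B u 0) (B v 0)"
      using adj[OF uv(1,2) e] AB uv \<open>0 < d\<close> by fastforce
    show ?thesis unfolding cbox_inter
      apply (rule exI[of _ "\<lambda>i. max (A u i) (A v i)"], rule exI[of _ "\<lambda>i. min (B u i) (B v i)"])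
      using eq0 pos[OF uv(1,2) e uv(3)] by simp
  qed
  have "d_CBU d V E"
    unfolding d_CBU_def
    apply (rule exI[of _ A], rule exI[of _ B])
    apply (intro conjI ballI impI)
    using AB apply blast
    using P1 apply blast
    using P0 P2 apply blast
    using P3 apply blast
    done
  then show ?thesis unfolding CBU_def d_def by auto
qed


theorem mainTheorem15:
  fixes V :: "'a set" and E :: "'a \<Rightarrow> 'a \<Rightarrow> bool"
  assumes "finite V" and "is_graph V E"
    and "circular_chromatic_number V E \<le> 5 / 2"
  shows "CBU V E"
proof -
  have "\<exists>f :: 'a \<Rightarrow> real. (\<forall>v\<in>V. 0 \<le> f v \<and> f v \<le> 5/2) \<and>
      (\<forall>u\<in>V. \<forall>v\<in>V. E u v \<longrightarrow> 1 \<le> \<bar>f u - f v\<bar> \<and> \<bar>f u - f v\<bar> \<le> 3/2)"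
    by (rule real_col[OF assms])
  then obtain f :: "'a \<Rightarrow> real" where f: "(\<forall>v\<in>V. 0 \<le> f v \<and> f v \<le> 5/2) \<and>
      (\<forall>u\<in>V. \<forall>v\<in>V. E u v \<longrightarrow> 1 \<le> \<bar>f u - f v\<bar> \<and> \<bar>f u - f v\<bar> \<le> 3/2)" ..
  have "\<exists>col. (\<forall>v\<in>V. col v < (5::nat)) \<and> (\<forall>u\<in>V. \<forall>v\<in>V. E u v \<longrightarrow>
      2 \<le> \<bar>int (col u) - int (col v)\<bar> \<and> \<bar>int (col u) - int (col v)\<bar> \<le> 3)"
    by (rule disc_col[OF conjunct1[OF f] conjunct2[OF f]])
  then obtain col where c: "(\<forall>v\<in>V. col v < (5::nat)) \<and> (\<forall>u\<in>V. \<forall>v\<in>V. E u v \<longrightarrow>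
      2 \<le> \<bar>int (col u) - int (col v)\<bar> \<and> \<bar>int (col u) - int (col v)\<bar> \<le> 3)" ..
  show ?thesis by (rule boxes[OF assms(1,2) conjunct1[OF c] conjunct2[OF c]])
qed

end
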